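(* For any total budget $\mathrm{TB}\in\mathbb N_0$, if $G$ and $H$ are numbers, then $G+H$ is a number.
   Context: Game forms are defined recursively: $G=\{G^{\mathcal L}\mid G^{\mathcal R}\}$ with finite sets of Left and Right options, and finite birthday. The budget set for total budget $\mathrm{TB}$ is $\mathcal B=\{0,\dots,\mathrm{TB},\hat 0,\dots,\widehat{\mathrm{TB}}\}$: state $p$ (resp. $\hat p$) means Left holds $p$ dollars and Right holds $\mathrm{TB}-p$, and Right (resp. Left) holds the tie-breaking marker. Play of $(G,\tilde p)$: at every position (terminal ones included) both players bid simultaneously, Left $\ell\in\{0,\dots,p\}$, Right $r\in\{0,\dots,\mathrm{TB}-p\}$. If Left holds the marker (state $\hat p$): if $\ell>r$ Left moves to $(G^L,\widehat{p-\ell})$, or, including the marker (allowed when $\ell\ge r$), to $(G^L,p-\ell)$; if $\ell=r$ Left wins, the marker passes to Right, play continues at $(G^L,p-\ell)$; if $\ell<r$ Right moves to $(G^R,\widehat{p+r})$. Symmetrically when Right holds the marker (state $p$): if $r>\ell$ Right moves to $(G^R,p+r)$ or, including the marker, to $(G^R,\widehat{p+r})$; if $r=\ell$ Right wins, the marker passes to Left, play continues at $(G^R,\widehat{p+r})$; if $r<\ell$ Left moves to $(G^L,p-\ell)$. A player who wins a bid but has no option loses. $o(G,\tilde p)\in\{\mathrm L,\mathrm R\}$ is the winner under optimal play; $\mathrm L>\mathrm R$. Disjunctive sum $G+H=\{G^{\mathcal L}+H,G+H^{\mathcal L}\mid G^{\mathcal R}+H,G+H^{\mathcal R}\}$. $G\ge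 H$ means $o(G+X,\tilde p)\ge o(H+X,\tilde p)$ for all game forms $X$ and all $\tilde p\in\mathcal B$; $G>H$ means $G\ge H$ and not $H\ge G$; $G<H$ means $H>G$. A game form $G$ is a number if all its options are numbers and $G^L<G<G^R$ for all $G^L\in G^{\mathcal L}$, $G^R\in G^{\mathcal R}$. *)

theory Defs
  imports Main "HOL-Library.FSet"
begin

datatype game = Game (lopts: "game fset") (ropts: "game fset")

text \<open>Budget states: a pair (p, m) with p \<le> TB Left's money; m = True means
  Left holds the tie-breaking marker (the hatted state \<open>p\<close>), m = False means Right holds it.\<close>

text \<open>Left chooses a bid l \<le> p (simultaneously with Right's bid r \<le> TB - p) such that for every r
  the resulting continuation is winning for Left: when Left wins the bid she chooses an option
  (and whether to include the marker, when allowed); when Right wins the bid every choice of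
  Right must still leave a Left win.  A player who wins a bid but has no option loses
  (empty existential / empty universal).\<close>
primrec lwins :: "nat \<Rightarrow> game \<Rightarrow> nat \<Rightarrow> bool \<Rightarrow> bool" where
  "lwins TB (Game GL GR) = (\<lambda>p m.
     (\<exists>l\<le>p. \<forall>r\<le>TB - p.
        (if m then
           (if r < l then (\<exists>f\<in>fset (fimage (lwins TB) GL). f (p - l) True \<or> f (p - l) False)
            else if l = r then (\<exists>f\<in>fset (fimage (lwins TB) GL). f (p - l) False)
            else (\<forall>f\<in>fset (fimage (lwins TB) GR). f (p + r) True))
         else
           (if l < r then (\<forall>f\<in>fset (fimage (lwins TB) GR). f (p + r) False \<and> f (p + r) True)
            else if l = r then (\<forall>f\<in>fset (fimage (lwins TB) GR). f (p + r) True)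
            else (\<exists>f\<in>fset (fimage (lwins TB) GL). f (p - l) False)))))"

datatype outcome = OL | OR

definition outc :: "nat \<Rightarrow> game \<Rightarrow> nat \<Rightarrow> bool \<Rightarrow> outcome" where
  "outc TB G p m = (if lwins TB G p m then OL else OR)"

definition outcome_le :: "outcome \<Rightarrow> outcome \<Rightarrow> bool" where
  "outcome_le a b = (a = OR \<or> b = OL)"

text \<open>Disjunctive sum (auxiliary recursion on the second summand).\<close>
primrec plusH :: "(game \<Rightarrow> game) fset \<Rightarrow> (game \<Rightarrow> game) fset \<Rightarrow> game \<Rightarrow> game" where
  "plusH fl fr (Game HL HR) =
     Game (fimage (\<lambda>f. f (Game HL HR)) fl |\<union>| fimage (plusH fl fr) HL)
          (fimage (\<lambda>f. f (Game HL HR)) fr |\<union>| fimage (plusH fl fr) HR)"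

primrec gplus :: "game \<Rightarrow> game \<Rightarrow> game" where
  "gplus (Game GL GR) = plusH (fimage gplus GL) (fimage gplus GR)"

lemma gplus_eq:
  "gplus (Game GL GR) (Game HL HR) =
     Game (fimage (\<lambda>g. gplus g (Game HL HR)) GL |\<union>| fimage (\<lambda>h. gplus (Game GL GR) h) HL)
          (fimage (\<lambda>g. gplus g (Game HL HR)) GR |\<union>| fimage (\<lambda>h. gplus (Game GL GR) h) HR)"
  by (simp add: fset.map_comp comp_def)

definition game_ge :: "nat \<Rightarrow> game \<Rightarrow> game \<Rightarrow> bool" where
  "game_ge TB G H = (\<forall>X p m. p \<le> TB \<longrightarrow>
      outcome_le (outc TB (gplus H X) p m) (outc TB (gplus G X) p m))"

definition game_gt :: "nat \<Rightarrow> game \<Rightarrow> game \<Rightarrow> bool" where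
  "game_gt TB G H = (game_ge TB G H \<and> \<not> game_ge TB H G)"

definition game_lt :: "nat \<Rightarrow> game \<Rightarrow> game \<Rightarrow> bool" where
  "game_lt TB G H = game_gt TB H G"

inductive is_number :: "nat \<Rightarrow> game \<Rightarrow> bool" for TB where
  "\<lbrakk> \<forall>x\<in>fset GL. is_number TB x; \<forall>x\<in>fset GR. is_number TB x;
     \<forall>gl\<in>fset GL. game_lt TB gl (Game GL GR);
     \<forall>gr\<in>fset GR. game_lt TB (Game GL GR) gr \<rbrakk>
   \<Longrightarrow> is_number TB (Game GL GR)"

end

theory Submission
  imports Defs
begin


declare gplus.simps[simp del] plusH.simps[simp del]

primrec gneg :: "game \<Rightarrow> game" where
  "gneg (Game L R) = Game (fimage gneg R) (fimage gneg L)"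

lemma gneg_gneg[simp]: "gneg (gneg G) = G"
proof (induction G rule: game.induct)
  case (Game L R)
  have "fimage (gneg \<circ> gneg) L = L" by (rule fset.map_ident_strong) (use Game in auto)
  moreover have "fimage (gneg \<circ> gneg) R = R" by (rule fset.map_ident_strong) (use Game in auto)
  ultimately show ?case by (simp add: fset.map_comp)
qed

lemma gplus_comm: "gplus G H = gplus H G"
proof (induction G arbitrary: H rule: game.induct)
  case (Game GL GR)
  note outer = this
  show ?case
  proof (induction H rule: game.induct)
    case (Game HL HR)
    have 1: "fimage (\<lambda>g. gplus g (Game HL HR)) GL = fimage (\<lambda>g. gplus (Game HL HR) g) GL"
      by (rule fset.map_cong0) (use outer in auto)
    have 2: "fimage (\<lambda>g. gplus g (Game HL HR)) GR = fimage (\<lambda>g. gplus (Game HL HR) g) GR"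
      by (rule fset.map_cong0) (use outer in auto)
    have 3: "fimage (\<lambda>h. gplus (Game GL GR) h) HL = fimage (\<lambda>h. gplus h (Game GL GR)) HL"
      by (rule fset.map_cong0) (use Game in auto)
    have 4: "fimage (\<lambda>h. gplus (Game GL GR) h) HR = fimage (\<lambda>h. gplus h (Game GL GR)) HR"
      by (rule fset.map_cong0) (use Game in auto)
    show ?case unfolding gplus_eq 1 2 3 4 by (simp add: sup_commute)
  qed
qed


lemma gplus_eqR: "gplus X (Game KL KR) =
   Game (fimage (\<lambda>x. gplus x (Game KL KR)) (lopts X) |\<union>| fimage (\<lambda>k. gplus X k) KL)
        (fimage (\<lambda>x. gplus x (Game KL KR)) (ropts X) |\<union>| fimage (\<lambda>k. gplus X k) KR)"
  by (cases X) (simp add: gplus_eq)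

lemma gplus_eqL: "gplus (Game GL GR) Y =
   Game (fimage (\<lambda>g. gplus g Y) GL |\<union>| fimage (\<lambda>y. gplus (Game GL GR) y) (lopts Y))
        (fimage (\<lambda>g. gplus g Y) GR |\<union>| fimage (\<lambda>y. gplus (Game GL GR) y) (ropts Y))"
  by (cases Y) (simp add: gplus_eq)

lemma lopts_gplus: "lopts (gplus (Game GL GR) (Game HL HR)) =
   fimage (\<lambda>g. gplus g (Game HL HR)) GL |\<union>| fimage (\<lambda>h. gplus (Game GL GR) h) HL"
  by (simp add: gplus_eq)
lemma ropts_gplus: "ropts (gplus (Game GL GR) (Game HL HR)) =
   fimage (\<lambda>g. gplus g (Game HL HR)) GR |\<union>| fimage (\<lambda>h. gplus (Game GL GR) h) HR"
  by (simp add: gplus_eq)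

lemma gneg_Game: "gneg X = Game (fimage gneg (ropts X)) (fimage gneg (lopts X))"
  by (cases X) simp

lemma gplus_assoc: "gplus (gplus G H) K = gplus G (gplus H K)"
proof (induction G arbitrary: H K rule: game.induct)
  case (Game GL GR)
  note o1 = this
  show ?case
  proof (induction H arbitrary: K rule: game.induct)
    case (Game HL HR)
    note o2 = this
    show ?case
    proof (induction K rule: game.induct)
      case (Game KL KR)
      note o3 = this
      have a1: "fimage (\<lambda>g. gplus (gplus g (Game HL HR)) (Game KL KR)) GL = fimage (\<lambda>g. gplus g (gplus (Game HL HR) (Game KL KR))) GL"
        by (rule fset.map_cong0) (use o1 in auto)
      have a2: "fimage (\<lambda>g. gplus (gplus g (Game HL HR)) (Game KL KR)) GR = fimage (\<lambda>g. gplus g (gplus (Game HL HR) (Game KL KR))) GR"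
        by (rule fset.map_cong0) (use o1 in auto)
      have b1: "fimage (\<lambda>h. gplus (gplus (Game GL GR) h) (Game KL KR)) HL = fimage (\<lambda>h. gplus (Game GL GR) (gplus h (Game KL KR))) HL"
        by (rule fset.map_cong0) (use o2 in auto)
      have b2: "fimage (\<lambda>h. gplus (gplus (Game GL GR) h) (Game KL KR)) HR = fimage (\<lambda>h. gplus (Game GL GR) (gplus h (Game KL KR))) HR"
        by (rule fset.map_cong0) (use o2 in auto)
      have c1: "fimage (\<lambda>k. gplus (gplus (Game GL GR) (Game HL HR)) k) KL = fimage (\<lambda>k. gplus (Game GL GR) (gplus (Game HL HR) k)) KL"
        by (rule fset.map_cong0) (use o3 in auto)
      have c2: "fimage (\<lambda>k. gplus (gplus (Game GL GR) (Game HL HR)) k) KR = fimage (\<lambda>k. gplus (Game GL GR) (gplus (Game HL HR) k)) KR"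
        by (rule fset.map_cong0) (use o3 in auto)
      show ?case
        apply (simp only: gplus_eqR[of "gplus (Game GL GR) (Game HL HR)" KL KR]
             gplus_eqL[of GL GR "gplus (Game HL HR) (Game KL KR)"])
        apply (simp only: lopts_gplus ropts_gplus fimage_funion fset.map_comp comp_def a1 a2 b1 b2 c1 c2)
        apply (simp add: sup_assoc)
        done
    qed
  qed
qed

lemma gneg_plus: "gneg (gplus G H) = gplus (gneg G) (gneg H)"
proof (induction G arbitrary: H rule: game.induct)
  case (Game GL GR)
  note outer = this
  show ?case
  proof (induction H rule: game.induct)
    case (Game HL HR)
    have a1: "fimage (\<lambda>g. gneg (gplus g (Game HL HR))) GL = fimage (\<lambda>g. gplus (gneg g) (gneg (Game HL HR))) GL"
      by (rule fset.map_cong0) (use outer in auto)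
    have a2: "fimage (\<lambda>g. gneg (gplus g (Game HL HR))) GR = fimage (\<lambda>g. gplus (gneg g) (gneg (Game HL HR))) GR"
      by (rule fset.map_cong0) (use outer in auto)
    have b1: "fimage (\<lambda>h. gneg (gplus (Game GL GR) h)) HL = fimage (\<lambda>h. gplus (gneg (Game GL GR)) (gneg h)) HL"
      by (rule fset.map_cong0) (use Game in auto)
    have b2: "fimage (\<lambda>h. gneg (gplus (Game GL GR) h)) HR = fimage (\<lambda>h. gplus (gneg (Game GL GR)) (gneg h)) HR"
      by (rule fset.map_cong0) (use Game in auto)
    show ?case
      apply (simp only: gneg_Game[of "gplus (Game GL GR) (Game HL HR)"] gneg.simps gplus_eq)
      apply (simp only: lopts_gplus ropts_gplus game.sel gneg.simps fimage_funion fset.map_comp comp_def a1 a2 b1 b2)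
      done
  qed
qed



definition LT :: "nat \<Rightarrow> game fset \<Rightarrow> nat \<Rightarrow> bool" where
  "LT TB GL q \<longleftrightarrow> (\<exists>g. g |\<in>| GL \<and> (lwins TB g q True \<or> lwins TB g q False))"
definition LF :: "nat \<Rightarrow> game fset \<Rightarrow> nat \<Rightarrow> bool" where
  "LF TB GL q \<longleftrightarrow> (\<exists>g. g |\<in>| GL \<and> lwins TB g q False)"
definition RT :: "nat \<Rightarrow> game fset \<Rightarrow> nat \<Rightarrow> bool" where
  "RT TB GR q \<longleftrightarrow> (\<forall>g. g |\<in>| GR \<longrightarrow> lwins TB g q True)"
definition RB :: "nat \<Rightarrow> game fset \<Rightarrow> nat \<Rightarrow> bool" where
  "RB TB GR q \<longleftrightarrow> (\<forall>g. g |\<in>| GR \<longrightarrow> lwins TB g q False \<and> lwins TB g q True)"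

lemma fBex_img: "fBex (f |`| A) P \<longleftrightarrow> (\<exists>x. x |\<in>| A \<and> P (f x))"
  by (auto intro: fBexI elim!: fBexE)
lemma fBall_img: "fBall (f |`| A) P \<longleftrightarrow> (\<forall>x. x |\<in>| A \<longrightarrow> P (f x))"
  by (auto intro: fBallI dest: fbspec)

lemma lwT: "lwins TB (Game GL GR) p True \<longleftrightarrow>
  (\<exists>l\<le>p. \<forall>r\<le>TB-p. (r<l \<longrightarrow> LT TB GL (p-l)) \<and> (r=l \<longrightarrow> LF TB GL (p-l)) \<and> (l<r \<longrightarrow> RT TB GR (p+r)))"
  unfolding LT_def LF_def RT_def
  apply (simp add: fBex_img fBall_img)
  apply (intro ex_cong1 conj_cong refl all_cong1 imp_cong)
  apply auto
  done

lemma lwF: "lwins TB (Game GL GR) p False \<longleftrightarrow>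
  (\<exists>l\<le>p. \<forall>r\<le>TB-p. (l<r \<longrightarrow> RB TB GR (p+r)) \<and> (r=l \<longrightarrow> RT TB GR (p+r)) \<and> (r<l \<longrightarrow> LF TB GL (p-l)))"
  unfolding RB_def LF_def RT_def
  apply (simp add: fBex_img fBall_img)
  apply (intro ex_cong1 conj_cong refl all_cong1 imp_cong)
  apply auto
  done


declare lwins.simps[simp del]

lemma mono1: "lwins TB G p m \<Longrightarrow> p \<le> q \<Longrightarrow> lwins TB G q m"
proof (induction G arbitrary: p q m rule: game.induct)
  case (Game GL GR)
  have LTm: "LT TB GL b" if "LT TB GL a" "a \<le> b" for a b
    using that Game.IH(1) unfolding LT_def by blast
  have LFm: "LF TB GL b" if "LF TB GL a" "a \<le> b" for a b
    using that Game.IH(1) unfolding LF_def by blast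
  have RTm: "RT TB GR b" if "RT TB GR a" "a \<le> b" for a b
    using that Game.IH(2) unfolding RT_def by blast
  have RBm: "RB TB GR b" if "RB TB GR a" "a \<le> b" for a b
    using that Game.IH(2) unfolding RB_def by blast
  show ?case
  proof (cases m)
    case True
    from Game.prems True obtain l where l: "l \<le> p" and
      H: "\<forall>r\<le>TB-p. (r<l \<longrightarrow> LT TB GL (p-l)) \<and> (r=l \<longrightarrow> LF TB GL (p-l)) \<and> (l<r \<longrightarrow> RT TB GR (p+r))"
      by (auto simp: lwT)
    have mT: "m = True" using True by simp
    show ?thesis unfolding mT lwT
    proof (intro exI[of _ l] conjI allI impI)
      show "l \<le> q" using l Game.prems by simp
    next
      fix r assume r: "r \<le> TB - q"
      then have r': "r \<le> TB - p" using Game.prems by simp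
      from H r' have h: "(r<l \<longrightarrow> LT TB GL (p-l)) \<and> (r=l \<longrightarrow> LF TB GL (p-l)) \<and> (l<r \<longrightarrow> RT TB GR (p+r))" by blast
      have a: "p - l \<le> q - l" "p + r \<le> q + r" using Game.prems by auto
      { assume "r < l" then show "LT TB GL (q-l)" using h a LTm by blast }
      { assume "r = l" then show "LF TB GL (q-l)" using h a LFm by blast }
      { assume "l < r" then show "RT TB GR (q+r)" using h a RTm by blast }
    qed
  next
    case False
    from Game.prems False obtain l where l: "l \<le> p" and
      H: "\<forall>r\<le>TB-p. (l<r \<longrightarrow> RB TB GR (p+r)) \<and> (r=l \<longrightarrow> RT TB GR (p+r)) \<and> (r<l \<longrightarrow> LF TB GL (p-l))"
      by (auto simp: lwF)
    have mF: "m = False" using False by simp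
    show ?thesis unfolding mF lwF
    proof (intro exI[of _ l] conjI allI impI)
      show "l \<le> q" using l Game.prems by simp
    next
      fix r assume r: "r \<le> TB - q"
      then have r': "r \<le> TB - p" using Game.prems by simp
      from H r' have h: "(l<r \<longrightarrow> RB TB GR (p+r)) \<and> (r=l \<longrightarrow> RT TB GR (p+r)) \<and> (r<l \<longrightarrow> LF TB GL (p-l))" by blast
      have a: "p - l \<le> q - l" "p + r \<le> q + r" using Game.prems by auto
      { assume "r < l" then show "LF TB GL (q-l)" using h a LFm by blast }
      { assume "r = l" then show "RT TB GR (q+r)" using h a RTm by blast }
      { assume "l < r" then show "RB TB GR (q+r)" using h a RBm by blast }
    qed
  qed
qed

lemma mono2: "lwins TB G p True \<Longrightarrow> p < q \<Longrightarrow> lwins TB G q False"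
proof (induction G arbitrary: p q rule: game.induct)
  case (Game GL GR)
  have LT_LF: "LF TB GL b" if "LT TB GL a" "a < b" for a b
    using that Game.IH(1) mono1[of TB _ a False b] unfolding LT_def LF_def
    by (meson less_imp_le)
  have LFm: "LF TB GL b" if "LF TB GL a" "a \<le> b" for a b
    using that mono1 unfolding LF_def by blast
  have RTm: "RT TB GR b" if "RT TB GR a" "a \<le> b" for a b
    using that mono1 unfolding RT_def by blast
  have RT_RB: "RB TB GR b" if "RT TB GR a" "a < b" for a b
    using that Game.IH(2) mono1[of TB _ a True b] unfolding RT_def RB_def
    by (meson less_imp_le)
  from Game.prems obtain l where l: "l \<le> p" and
    H: "\<forall>r\<le>TB-p. (r<l \<longrightarrow> LT TB GL (p-l)) \<and> (r=l \<longrightarrow> LF TB GL (p-l)) \<and> (l<r \<longrightarrow> RT TB GR (p+r))"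
    by (auto simp: lwT)
  show ?case
  proof (cases "l \<le> TB - p")
    case False
    show ?thesis unfolding lwF
    proof (intro exI[of _ l] conjI allI impI)
      show "l \<le> q" using l Game.prems by simp
    next
      fix r assume r: "r \<le> TB - q"
      then have rl: "r < l" using False Game.prems by linarith
      from H[rule_format, of 0] rl have "LT TB GL (p-l)" by auto
      moreover have "p - l < q - l" using l Game.prems by linarith
      ultimately have "LF TB GL (q-l)" using LT_LF by blast
      then show "l < r \<Longrightarrow> RB TB GR (q+r)" "r = l \<Longrightarrow> RT TB GR (q+r)" "r < l \<Longrightarrow> LF TB GL (q-l)"
        using rl by auto
    qed
  next
    case True
    show ?thesis unfolding lwF
    proof (intro exI[of _ "Suc l"] conjI allI impI)
      show "Suc l \<le> q" using l Game.prems by simp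
    next
      fix r assume r: "r \<le> TB - q"
      then have r': "r \<le> TB - p" using Game.prems by simp
      have LFl: "LF TB GL (p-l)" using H True by auto
      { assume "r < Suc l"
        then show "LF TB GL (q - Suc l)" using LFl LFm[of "p-l" "q - Suc l"] l Game.prems by simp }
      { assume rr: "r = Suc l"
        then have "RT TB GR (p+r)" using H r' by auto
        then show "RT TB GR (q+r)" using RTm[of "p+r" "q+r"] Game.prems by simp }
      { assume rr: "Suc l < r"
        then have "RT TB GR (p+r)" using H r' by auto
        then show "RB TB GR (q+r)" using RT_RB[of "p+r" "q+r"] Game.prems by simp }
    qed
  qed
qed



lemma minimaxT:
  fixes A B C :: "nat \<Rightarrow> bool"
  assumes Am: "\<And>a b. A a \<Longrightarrow> a \<le> b \<Longrightarrow> A b"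
      and Bm: "\<And>a b. B a \<Longrightarrow> a \<le> b \<Longrightarrow> B b"
      and Cm: "\<And>a b. C a \<Longrightarrow> a \<le> b \<Longrightarrow> C b"
      and BA: "\<And>a. B a \<Longrightarrow> A a"
      and AB: "\<And>a b. A a \<Longrightarrow> a < b \<Longrightarrow> B b"
      and nL: "\<not> (\<exists>l\<le>p. \<forall>r\<le>TB-p. (r<l \<longrightarrow> A (p-l)) \<and> (r=l \<longrightarrow> B (p-l)) \<and> (l<r \<longrightarrow> C (p+r)))"
  shows "\<exists>r\<le>TB-p. \<forall>l\<le>p. (r<l \<longrightarrow> \<not> A (p-l)) \<and> (l=r \<longrightarrow> \<not> B (p-l)) \<and> (l<r \<longrightarrow> \<not> C (p+r))"
proof -
  define S where "S = insert 0 {r. 1 \<le> r \<and> r \<le> TB - p \<and> \<not> C (p+r)}"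
  have finS: "finite S" unfolding S_def by (rule finite_insert[THEN iffD2]) (rule finite_subset[of _ "{..TB-p}"], auto)
  define R where "R = Max S"
  have RS: "R \<in> S" unfolding R_def using finS by (intro Max_in) (auto simp: S_def)
  have maxR: "r \<le> R" if "1 \<le> r" "r \<le> TB - p" "\<not> C (p+r)" for r
    unfolding R_def using finS that by (auto simp: S_def intro: Max_ge)
  have Crgt: "C (p+r)" if "R < r" "r \<le> TB - p" for r
    using maxR[of r] that by fastforce
  have Rle: "R \<le> TB - p" using RS by (auto simp: S_def)
  show ?thesis
  proof (intro exI[of _ R] conjI allI impI Rle)
    fix l assume l: "l \<le> p"
    from nL l obtain r where r: "r \<le> TB - p" and
      nr: "\<not> ((r<l \<longrightarrow> A (p-l)) \<and> (r=l \<longrightarrow> B (p-l)) \<and> (l<r \<longrightarrow> C (p+r)))" by blast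
    { assume "l < R"
      then have "1 \<le> R" by simp
      then show "\<not> C (p+R)" using RS by (auto simp: S_def) }
    { assume lR: "l = R"
      show "\<not> B (p-l)"
      proof (cases "r < l")
        case True then show ?thesis using nr BA by auto
      next
        case False
        show ?thesis
        proof (cases "r = l")
          case True then show ?thesis using nr by auto
        next
          case False
          then have "l < r" using \<open>\<not> r < l\<close> by simp
          then show ?thesis using nr Crgt[of r] r lR by auto
        qed
      qed }
    { assume lR: "R < l"
      show "\<not> A (p-l)"
      proof
        assume Al: "A (p-l)"
        have "\<not> l < r" using nr Crgt[of r] r lR by auto
        moreover have "\<not> r < l" using nr Al by auto
        ultimately have "r = l" by simp
        have "\<exists>l\<le>p. \<forall>r\<le>TB-p. (r<l \<longrightarrow> A (p-l)) \<and> (r=l \<longrightarrow> B (p-l)) \<and> (l<r \<longrightarrow> C (p+r))"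
        proof (intro exI[of _ "l - 1"] conjI allI impI)
          show "l - 1 \<le> p" using l by simp
        next
          fix r' assume r': "r' \<le> TB - p"
          { assume "r' < l - 1" then show "A (p - (l-1))" using Am[OF Al] l by simp }
          { assume "r' = l - 1" then show "B (p - (l-1))" using AB[OF Al] l lR by simp }
          { assume "l - 1 < r'" then show "C (p + r')" using Crgt[of r'] r' lR by simp }
        qed
        then show False using nL by blast
      qed }
  qed
qed

lemma minimaxF:
  fixes B C D :: "nat \<Rightarrow> bool"
  assumes Bm: "\<And>a b. B a \<Longrightarrow> a \<le> b \<Longrightarrow> B b"
      and Cm: "\<And>a b. C a \<Longrightarrow> a \<le> b \<Longrightarrow> C b"
      and DC: "\<And>a. D a \<Longrightarrow> C a"
      and CD: "\<And>a b. C a \<Longrightarrow> a < b \<Longrightarrow> D b"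
      and nL: "\<not> (\<exists>l\<le>p. \<forall>r\<le>TB-p. (l<r \<longrightarrow> D (p+r)) \<and> (r=l \<longrightarrow> C (p+r)) \<and> (r<l \<longrightarrow> B (p-l)))"
  shows "\<exists>r\<le>TB-p. \<forall>l\<le>p. (l<r \<longrightarrow> \<not> D (p+r)) \<and> (l=r \<longrightarrow> \<not> C (p+r)) \<and> (r<l \<longrightarrow> \<not> B (p-l))"
proof -
  define L where "L = (LEAST l. l \<le> p \<longrightarrow> \<not> B (p-l))"
  have L1: "L \<le> p \<longrightarrow> \<not> B (p-L)" unfolding L_def by (rule LeastI[of _ "Suc p"]) simp
  have L2: "L \<le> Suc p" unfolding L_def by (rule Least_le) simp
  have L3: "l \<le> p \<and> B (p-l)" if "l < L" for l
    using not_less_Least[OF that[unfolded L_def]] by blast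
  define r0 where "r0 = L - 1"
  have r0p: "r0 \<le> p" using L2 by (simp add: r0_def)
  from nL r0p obtain r where r: "r \<le> TB - p" and
    nr: "\<not> ((r0<r \<longrightarrow> D (p+r)) \<and> (r=r0 \<longrightarrow> C (p+r)) \<and> (r<r0 \<longrightarrow> B (p-r0)))" by blast
  have "\<not> r < r0"
  proof
    assume "r < r0"
    then have "r0 < L" by (simp add: r0_def)
    then have "B (p - r0)" using L3 by blast
    then show False using nr \<open>r < r0\<close> by auto
  qed
  then have rr: "r0 \<le> r" by simp
  have nC: "\<not> C (p + r0)"
  proof (cases "r = r0")
    case True then show ?thesis using nr by auto
  next
    case False
    then have "r0 < r" using rr by simp
    then have nD: "\<not> D (p+r)" using nr by auto
    show ?thesis
    proof
      assume "C (p + r0)"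
      then have "D (p + r)" using CD \<open>r0 < r\<close> by simp
      then show False using nD by simp
    qed
  qed
  show ?thesis
  proof (intro exI[of _ r0] conjI allI impI)
    show "r0 \<le> TB - p" using rr r by simp
  next
    fix l assume l: "l \<le> p"
    { assume "l < r0" then show "\<not> D (p + r0)" using nC DC by blast }
    { assume "l = r0" then show "\<not> C (p + r0)" using nC by simp }
    { assume lr: "r0 < l"
      then have "L \<le> l" by (simp add: r0_def)
      then have "L \<le> p" using l by simp
      then have "\<not> B (p - L)" using L1 by simp
      moreover have "p - l \<le> p - L" using \<open>L \<le> l\<close> by simp
      ultimately show "\<not> B (p - l)" using Bm by blast }
  qed
qed


lemma minimaxT_iff:
  fixes A B C :: "nat \<Rightarrow> bool"
  assumes Am: "\<And>a b. A a \<Longrightarrow> a \<le> b \<Longrightarrow> A b"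
      and Bm: "\<And>a b. B a \<Longrightarrow> a \<le> b \<Longrightarrow> B b"
      and Cm: "\<And>a b. C a \<Longrightarrow> a \<le> b \<Longrightarrow> C b"
      and BA: "\<And>a. B a \<Longrightarrow> A a"
      and AB: "\<And>a b. A a \<Longrightarrow> a < b \<Longrightarrow> B b"
  shows "(\<exists>r\<le>TB-p. \<forall>l\<le>p. (r<l \<longrightarrow> \<not> A (p-l)) \<and> (l=r \<longrightarrow> \<not> B (p-l)) \<and> (l<r \<longrightarrow> \<not> C (p+r)))
     \<longleftrightarrow> \<not> (\<exists>l\<le>p. \<forall>r\<le>TB-p. (r<l \<longrightarrow> A (p-l)) \<and> (r=l \<longrightarrow> B (p-l)) \<and> (l<r \<longrightarrow> C (p+r)))"
proof
  assume "\<exists>r\<le>TB-p. \<forall>l\<le>p. (r<l \<longrightarrow> \<not> A (p-l)) \<and> (l=r \<longrightarrow> \<not> B (p-l)) \<and> (l<r \<longrightarrow> \<not> C (p+r))"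
  then obtain r where r: "r \<le> TB - p" "\<forall>l\<le>p. (r<l \<longrightarrow> \<not> A (p-l)) \<and> (l=r \<longrightarrow> \<not> B (p-l)) \<and> (l<r \<longrightarrow> \<not> C (p+r))" by blast
  show "\<not> (\<exists>l\<le>p. \<forall>r\<le>TB-p. (r<l \<longrightarrow> A (p-l)) \<and> (r=l \<longrightarrow> B (p-l)) \<and> (l<r \<longrightarrow> C (p+r)))"
  proof
    assume "\<exists>l\<le>p. \<forall>r\<le>TB-p. (r<l \<longrightarrow> A (p-l)) \<and> (r=l \<longrightarrow> B (p-l)) \<and> (l<r \<longrightarrow> C (p+r))"
    then obtain l where l: "l \<le> p" "\<forall>r\<le>TB-p. (r<l \<longrightarrow> A (p-l)) \<and> (r=l \<longrightarrow> B (p-l)) \<and> (l<r \<longrightarrow> C (p+r))" by blast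
    have 1: "(r<l \<longrightarrow> \<not> A (p-l)) \<and> (l=r \<longrightarrow> \<not> B (p-l)) \<and> (l<r \<longrightarrow> \<not> C (p+r))" using r l by blast
    have 2: "(r<l \<longrightarrow> A (p-l)) \<and> (r=l \<longrightarrow> B (p-l)) \<and> (l<r \<longrightarrow> C (p+r))" using r l by blast
    show False using 1 2 by (metis linorder_neqE_nat)
  qed
next
  assume nL: "\<not> (\<exists>l\<le>p. \<forall>r\<le>TB-p. (r<l \<longrightarrow> A (p-l)) \<and> (r=l \<longrightarrow> B (p-l)) \<and> (l<r \<longrightarrow> C (p+r)))"
  show "\<exists>r\<le>TB-p. \<forall>l\<le>p. (r<l \<longrightarrow> \<not> A (p-l)) \<and> (l=r \<longrightarrow> \<not> B (p-l)) \<and> (l<r \<longrightarrow> \<not> C (p+r))"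
    by (rule minimaxT[OF Am Bm Cm BA AB nL])
qed

lemma minimaxF_iff:
  fixes B C D :: "nat \<Rightarrow> bool"
  assumes Bm: "\<And>a b. B a \<Longrightarrow> a \<le> b \<Longrightarrow> B b"
      and Cm: "\<And>a b. C a \<Longrightarrow> a \<le> b \<Longrightarrow> C b"
      and DC: "\<And>a. D a \<Longrightarrow> C a"
      and CD: "\<And>a b. C a \<Longrightarrow> a < b \<Longrightarrow> D b"
  shows "(\<exists>r\<le>TB-p. \<forall>l\<le>p. (l<r \<longrightarrow> \<not> D (p+r)) \<and> (l=r \<longrightarrow> \<not> C (p+r)) \<and> (r<l \<longrightarrow> \<not> B (p-l)))
    \<longleftrightarrow> \<not> (\<exists>l\<le>p. \<forall>r\<le>TB-p. (l<r \<longrightarrow> D (p+r)) \<and> (r=l \<longrightarrow> C (p+r)) \<and> (r<l \<longrightarrow> B (p-l)))"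
proof
  assume "\<exists>r\<le>TB-p. \<forall>l\<le>p. (l<r \<longrightarrow> \<not> D (p+r)) \<and> (l=r \<longrightarrow> \<not> C (p+r)) \<and> (r<l \<longrightarrow> \<not> B (p-l))"
  then obtain r where r: "r \<le> TB - p" "\<forall>l\<le>p. (l<r \<longrightarrow> \<not> D (p+r)) \<and> (l=r \<longrightarrow> \<not> C (p+r)) \<and> (r<l \<longrightarrow> \<not> B (p-l))" by blast
  show "\<not> (\<exists>l\<le>p. \<forall>r\<le>TB-p. (l<r \<longrightarrow> D (p+r)) \<and> (r=l \<longrightarrow> C (p+r)) \<and> (r<l \<longrightarrow> B (p-l)))"
  proof
    assume "\<exists>l\<le>p. \<forall>r\<le>TB-p. (l<r \<longrightarrow> D (p+r)) \<and> (r=l \<longrightarrow> C (p+r)) \<and> (r<l \<longrightarrow> B (p-l))"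
    then obtain l where l: "l \<le> p" "\<forall>r\<le>TB-p. (l<r \<longrightarrow> D (p+r)) \<and> (r=l \<longrightarrow> C (p+r)) \<and> (r<l \<longrightarrow> B (p-l))" by blast
    have 1: "(l<r \<longrightarrow> \<not> D (p+r)) \<and> (l=r \<longrightarrow> \<not> C (p+r)) \<and> (r<l \<longrightarrow> \<not> B (p-l))" using r l by blast
    have 2: "(l<r \<longrightarrow> D (p+r)) \<and> (r=l \<longrightarrow> C (p+r)) \<and> (r<l \<longrightarrow> B (p-l))" using r l by blast
    show False using 1 2 by (metis linorder_neqE_nat)
  qed
next
  assume nL: "\<not> (\<exists>l\<le>p. \<forall>r\<le>TB-p. (l<r \<longrightarrow> D (p+r)) \<and> (r=l \<longrightarrow> C (p+r)) \<and> (r<l \<longrightarrow> B (p-l)))"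
  show "\<exists>r\<le>TB-p. \<forall>l\<le>p. (l<r \<longrightarrow> \<not> D (p+r)) \<and> (l=r \<longrightarrow> \<not> C (p+r)) \<and> (r<l \<longrightarrow> \<not> B (p-l))"
    by (rule minimaxF[OF Bm Cm DC CD nL])
qed

lemma all_fimage: "(\<forall>x. x |\<in>| f |`| A \<longrightarrow> P x) \<longleftrightarrow> (\<forall>y. y |\<in>| A \<longrightarrow> P (f y))"
  by auto
lemma ex_fimage: "(\<exists>x. x |\<in>| f |`| A \<and> P x) \<longleftrightarrow> (\<exists>y. y |\<in>| A \<and> P (f y))"
  by auto

lemma LT_m: "LT TB GL a \<Longrightarrow> a \<le> b \<Longrightarrow> LT TB GL b" unfolding LT_def using mono1 by blast
lemma LF_m: "LF TB GL a \<Longrightarrow> a \<le> b \<Longrightarrow> LF TB GL b" unfolding LF_def using mono1 by blast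
lemma RT_m: "RT TB GR a \<Longrightarrow> a \<le> b \<Longrightarrow> RT TB GR b" unfolding RT_def using mono1 by blast
lemma RB_m: "RB TB GR a \<Longrightarrow> a \<le> b \<Longrightarrow> RB TB GR b" unfolding RB_def using mono1 by blast
lemma LF_LT: "LF TB GL a \<Longrightarrow> LT TB GL a" unfolding LT_def LF_def by blast
lemma RB_RT: "RB TB GR a \<Longrightarrow> RT TB GR a" unfolding RT_def RB_def by blast
lemma LT_LF: "LT TB GL a \<Longrightarrow> a < b \<Longrightarrow> LF TB GL b" unfolding LT_def LF_def
  using mono1[of TB _ a False b] mono2 by (meson less_imp_le)
lemma RT_RB: "RT TB GR a \<Longrightarrow> a < b \<Longrightarrow> RB TB GR b" unfolding RT_def RB_def
  using mono1[of TB _ a True b] mono2 by (meson less_imp_le)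



lemma det: "p \<le> TB \<Longrightarrow> lwins TB (gneg G) (TB - p) (\<not> m) \<longleftrightarrow> \<not> lwins TB G p m"
proof (induction G arbitrary: p m rule: game.induct)
  case (Game GL GR)
  have IHL: "lwins TB (gneg g) (TB-q) \<mu> \<longleftrightarrow> \<not> lwins TB g q (\<not>\<mu>)" if "g |\<in>| GL" "q \<le> TB" for g q \<mu>
    using Game.IH(1)[OF that, of "\<not>\<mu>"] by simp
  have IHR: "lwins TB (gneg g) (TB-q) \<mu> \<longleftrightarrow> \<not> lwins TB g q (\<not>\<mu>)" if "g |\<in>| GR" "q \<le> TB" for g q \<mu>
    using Game.IH(2)[OF that, of "\<not>\<mu>"] by simp
  have t1: "RB TB (gneg |`| GL) (TB-q) \<longleftrightarrow> \<not> LT TB GL q" if "q \<le> TB" for q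
    unfolding RB_def LT_def all_fimage using IHL[OF _ that] by auto
  have t2: "RT TB (gneg |`| GL) (TB-q) \<longleftrightarrow> \<not> LF TB GL q" if "q \<le> TB" for q
    unfolding RT_def LF_def all_fimage using IHL[OF _ that] by auto
  have t3: "LF TB (gneg |`| GR) (TB-q) \<longleftrightarrow> \<not> RT TB GR q" if "q \<le> TB" for q
    unfolding RT_def LF_def ex_fimage using IHR[OF _ that] by auto
  have t4: "LT TB (gneg |`| GR) (TB-q) \<longleftrightarrow> \<not> RB TB GR q" if "q \<le> TB" for q
    unfolding RB_def LT_def ex_fimage using IHR[OF _ that] by auto
  have a3: "TB - (TB - p) = p" using Game.prems by simp
  have t1': "RB TB (gneg |`| GL) (TB - p + l) \<longleftrightarrow> \<not> LT TB GL (p - l)" if "l \<le> p" for l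
  proof -
    have "TB - p + l = TB - (p - l)" using that Game.prems by simp
    then show ?thesis by (simp only:) (rule t1, use Game.prems Game.prems in simp)
  qed
  have t2': "RT TB (gneg |`| GL) (TB - p + l) \<longleftrightarrow> \<not> LF TB GL (p - l)" if "l \<le> p" for l
  proof -
    have "TB - p + l = TB - (p - l)" using that Game.prems by simp
    then show ?thesis by (simp only:) (rule t2, use Game.prems Game.prems in simp)
  qed
  have t3': "LF TB (gneg |`| GR) (TB - p - r) \<longleftrightarrow> \<not> RT TB GR (p + r)" if "r \<le> TB - p" for r
  proof -
    have "TB - p - r = TB - (p + r)" by simp
    then show ?thesis by (simp only:) (rule t3, use that Game.prems in simp)
  qed
  have t4': "LT TB (gneg |`| GR) (TB - p - r) \<longleftrightarrow> \<not> RB TB GR (p + r)" if "r \<le> TB - p" for r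
  proof -
    have "TB - p - r = TB - (p + r)" by simp
    then show ?thesis by (simp only:) (rule t4, use that Game.prems in simp)
  qed
  show ?case
  proof (cases m)
    case True
    have mT: "m = True" using True by simp
    have "lwins TB (gneg (Game GL GR)) (TB - p) (\<not> m) \<longleftrightarrow>
       (\<exists>r\<le>TB-p. \<forall>l\<le>p. (r<l \<longrightarrow> RB TB (gneg |`| GL) (TB - p + l)) \<and> (l=r \<longrightarrow> RT TB (gneg |`| GL) (TB - p + l))
          \<and> (l<r \<longrightarrow> LF TB (gneg |`| GR) (TB - p - r)))"
      unfolding mT by (simp only: gneg.simps lwF a3 not_True_eq_False)
    also have "\<dots> \<longleftrightarrow> (\<exists>r\<le>TB-p. \<forall>l\<le>p. (r<l \<longrightarrow> \<not> LT TB GL (p-l)) \<and> (l=r \<longrightarrow> \<not> LF TB GL (p-l))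
          \<and> (l<r \<longrightarrow> \<not> RT TB GR (p+r)))"
      by (intro ex_cong1 all_cong1 imp_cong conj_cong refl; simp only: t1' t2' t3')
    also have "\<dots> \<longleftrightarrow> \<not> lwins TB (Game GL GR) p m"
      unfolding mT lwT
      by (rule minimaxT_iff) (auto intro: LT_m LF_m RT_m LF_LT LT_LF)
    finally show ?thesis .
  next
    case False
    have mF: "m = False" using False by simp
    have "lwins TB (gneg (Game GL GR)) (TB - p) (\<not> m) \<longleftrightarrow>
       (\<exists>r\<le>TB-p. \<forall>l\<le>p. (l<r \<longrightarrow> LT TB (gneg |`| GR) (TB - p - r)) \<and> (l=r \<longrightarrow> LF TB (gneg |`| GR) (TB - p - r))
          \<and> (r<l \<longrightarrow> RT TB (gneg |`| GL) (TB - p + l)))"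
      unfolding mF by (simp only: gneg.simps lwT a3 not_False_eq_True)
    also have "\<dots> \<longleftrightarrow> (\<exists>r\<le>TB-p. \<forall>l\<le>p. (l<r \<longrightarrow> \<not> RB TB GR (p+r)) \<and> (l=r \<longrightarrow> \<not> RT TB GR (p+r))
          \<and> (r<l \<longrightarrow> \<not> LF TB GL (p-l)))"
      by (intro ex_cong1 all_cong1 imp_cong conj_cong refl; simp only: t2' t3' t4')
    also have "\<dots> \<longleftrightarrow> \<not> lwins TB (Game GL GR) p m"
      unfolding mF lwF
      by (rule minimaxF_iff) (auto intro: LF_m RT_m RB_RT RT_RB)
    finally show ?thesis .
  qed
qed



lemma gplus_lcomm: "gplus a (gplus b c) = gplus b (gplus a c)"
  by (metis gplus_assoc gplus_comm)

lemmas gac = gplus_assoc gplus_comm gplus_lcomm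

lemma detX: "p \<le> TB \<Longrightarrow> lwins TB (gneg A) p m \<longleftrightarrow> \<not> lwins TB A (TB - p) (\<not> m)"
  using det[of "TB - p" TB A "\<not> m"] by simp

lemma ge_iff: "game_ge TB G H \<longleftrightarrow> (\<forall>X p m. p \<le> TB \<longrightarrow> lwins TB (gplus H X) p m \<longrightarrow> lwins TB (gplus G X) p m)"
  unfolding game_ge_def outcome_le_def outc_def by (auto split: if_splits)

lemma geD: "game_ge TB G H \<Longrightarrow> p \<le> TB \<Longrightarrow> lwins TB (gplus H X) p m \<Longrightarrow> lwins TB (gplus G X) p m"
  unfolding ge_iff by blast

lemma ge_trans: "game_ge TB A B \<Longrightarrow> game_ge TB B C \<Longrightarrow> game_ge TB A C"
  unfolding ge_iff by blast

lemma ge_add: "game_ge TB G H \<Longrightarrow> game_ge TB (gplus G K) (gplus H K)"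
  unfolding ge_iff by (simp add: gplus_assoc)

lemma neg_ge: "game_ge TB G H \<Longrightarrow> game_ge TB (gneg H) (gneg G)"
  unfolding ge_iff
proof (intro allI impI)
  fix X p m
  assume ge: "\<forall>X p m. p \<le> TB \<longrightarrow> lwins TB (gplus H X) p m \<longrightarrow> lwins TB (gplus G X) p m"
    and p: "p \<le> TB" and w: "lwins TB (gplus (gneg G) X) p m"
  have e1: "gplus (gneg G) X = gneg (gplus G (gneg X))" by (simp add: gneg_plus)
  have e2: "gplus (gneg H) X = gneg (gplus H (gneg X))" by (simp add: gneg_plus)
  have "\<not> lwins TB (gplus G (gneg X)) (TB - p) (\<not> m)" using w p unfolding e1 by (simp add: detX)
  then have "\<not> lwins TB (gplus H (gneg X)) (TB - p) (\<not> m)" using ge by auto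
  then show "lwins TB (gplus (gneg H) X) p m" unfolding e2 using p by (simp add: detX)
qed

definition ge0 :: "nat \<Rightarrow> game \<Rightarrow> bool" where
  "ge0 TB K \<longleftrightarrow> (\<forall>Y p m. p \<le> TB \<longrightarrow> lwins TB Y p m \<longrightarrow> lwins TB (gplus K Y) p m)"

lemma ge0D: "ge0 TB K \<Longrightarrow> p \<le> TB \<Longrightarrow> lwins TB Y p m \<Longrightarrow> lwins TB (gplus K Y) p m"
  unfolding ge0_def by blast

lemma lopts_plus: "x |\<in>| lopts (gplus K Z) \<longleftrightarrow> (\<exists>k. k |\<in>| lopts K \<and> x = gplus k Z) \<or> (\<exists>z. z |\<in>| lopts Z \<and> x = gplus K z)"
  by (cases K; cases Z) (auto simp: gplus_eq)
lemma ropts_plus: "x |\<in>| ropts (gplus K Z) \<longleftrightarrow> (\<exists>k. k |\<in>| ropts K \<and> x = gplus k Z) \<or> (\<exists>z. z |\<in>| ropts Z \<and> x = gplus K z)"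
  by (cases K; cases Z) (auto simp: gplus_eq)
lemma lopts_neg: "x |\<in>| lopts (gneg H) \<longleftrightarrow> (\<exists>h. h |\<in>| ropts H \<and> x = gneg h)"
  by (cases H) auto
lemma ropts_neg: "x |\<in>| ropts (gneg H) \<longleftrightarrow> (\<exists>h. h |\<in>| lopts H \<and> x = gneg h)"
  by (cases H) auto

lemma lwT': "lwins TB G p True \<longleftrightarrow>
  (\<exists>l\<le>p. \<forall>r\<le>TB-p. (r<l \<longrightarrow> LT TB (lopts G) (p-l)) \<and> (r=l \<longrightarrow> LF TB (lopts G) (p-l)) \<and> (l<r \<longrightarrow> RT TB (ropts G) (p+r)))"
  by (cases G) (simp add: lwT)
lemma lwF': "lwins TB G p False \<longleftrightarrow>
  (\<exists>l\<le>p. \<forall>r\<le>TB-p. (l<r \<longrightarrow> RB TB (ropts G) (p+r)) \<and> (r=l \<longrightarrow> RT TB (ropts G) (p+r)) \<and> (r<l \<longrightarrow> LF TB (lopts G) (p-l)))"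
  by (cases G) (simp add: lwF)

lemma T1_aux:
  assumes K0: "ge0 TB K" and klK: "kl |\<in>| lopts K" and kl0: "ge0 TB kl"
    and KR: "\<And>kr. kr |\<in>| ropts K \<Longrightarrow> game_ge TB kr K"
  shows "TB - q = n \<Longrightarrow> q \<le> TB \<Longrightarrow> lwins TB Z q False \<Longrightarrow> lwins TB (gplus K Z) q True"
proof (induction n arbitrary: q Z rule: less_induct)
  case (less n)
  from less.prems(3) obtain l where l: "l \<le> q" and
    H: "\<forall>r\<le>TB-q. (l<r \<longrightarrow> RB TB (ropts Z) (q+r)) \<and> (r=l \<longrightarrow> RT TB (ropts Z) (q+r)) \<and> (r<l \<longrightarrow> LF TB (lopts Z) (q-l))"
    unfolding lwF' by blast
  have Rmove: "RT TB (ropts (gplus K Z)) (q+r)" if r: "0 < r" "r \<le> TB - q" and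
    zr: "\<And>z. z |\<in>| ropts Z \<Longrightarrow> lwins TB z (q+r) True" for r
    unfolding RT_def
  proof (intro allI impI)
    fix x assume "x |\<in>| ropts (gplus K Z)"
    then consider (a) k where "k |\<in>| ropts K" "x = gplus k Z" | (b) z where "z |\<in>| ropts Z" "x = gplus K z"
      unfolding ropts_plus by blast
    then show "lwins TB x (q + r) True"
    proof cases
      case a
      have "lwins TB Z (q+r) False" using mono1[OF less.prems(3)] by simp
      then have "lwins TB (gplus K Z) (q+r) True"
        using less.IH[of "TB - (q+r)" "q+r" Z] less.prems r by simp
      then show ?thesis using geD[OF KR[OF a(1)], of "q+r" Z True] a(2) r by simp
    next
      case b
      then show ?thesis using ge0D[OF K0, of "q+r" z True] zr[OF b(1)] r by simp
    qed
  qed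
  have LK: "LF TB (lopts (gplus K Z)) (q - l')" if "LF TB (lopts Z) (q - l)" "l' \<le> l" "l' \<le> q" for l'
  proof -
    from that(1) obtain z where z: "z |\<in>| lopts Z" "lwins TB z (q-l) False" unfolding LF_def by blast
    have "lwins TB z (q-l') False" using mono1[OF z(2)] that by simp
    then have "lwins TB (gplus K z) (q-l') False" using ge0D[OF K0] less.prems by simp
    then show ?thesis unfolding LF_def lopts_plus using z(1) by blast
  qed
  show ?case
  proof (cases "l = 0")
    case True
    show ?thesis unfolding lwT'
    proof (intro exI[of _ 0] conjI allI impI)
      fix r assume r: "r \<le> TB - q"
      show "r < 0 \<Longrightarrow> LT TB (lopts (gplus K Z)) (q - 0)" by simp
      { assume "r = 0"
        have "lwins TB (gplus kl Z) q False" using ge0D[OF kl0] less.prems by simp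
        then show "LF TB (lopts (gplus K Z)) (q - 0)" unfolding LF_def lopts_plus using klK by auto }
      { assume r0: "0 < r"
        have "RB TB (ropts Z) (q+r)" using H r r0 True by auto
        then show "RT TB (ropts (gplus K Z)) (q + r)" using Rmove[OF r0 r] unfolding RB_def by blast }
    qed simp
  next
    case False
    have LFl: "LF TB (lopts Z) (q-l)" using H False by auto
    show ?thesis unfolding lwT'
    proof (intro exI[of _ "l - 1"] conjI allI impI)
      show "l - 1 \<le> q" using l by simp
    next
      fix r assume r: "r \<le> TB - q"
      { assume "r < l - 1"
        then show "LT TB (lopts (gplus K Z)) (q - (l-1))" using LK[OF LFl, of "l-1"] l LF_LT by simp }
      { assume "r = l - 1"
        then show "LF TB (lopts (gplus K Z)) (q - (l-1))" using LK[OF LFl, of "l-1"] l by simp }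
      { assume rl: "l - 1 < r"
        have zr: "lwins TB z (q+r) True" if "z |\<in>| ropts Z" for z
        proof (cases "r = l")
          case True
          then show ?thesis using H r that unfolding RT_def by auto
        next
          case False
          then have "l < r" using rl by simp
          then show ?thesis using H r that unfolding RB_def by auto
        qed
        show "RT TB (ropts (gplus K Z)) (q + r)" using Rmove[OF _ r zr] rl by simp }
    qed
  qed
qed

lemma T1:
  assumes "ge0 TB K" "kl |\<in>| lopts K" "ge0 TB kl"
    "\<And>kr. kr |\<in>| ropts K \<Longrightarrow> game_ge TB kr K"
    "q \<le> TB" "lwins TB Z q False"
  shows "lwins TB (gplus K Z) q True"
  using T1_aux[OF assms(1-4) refl assms(5,6)] .



lemma num_optL: "is_number TB h \<Longrightarrow> x |\<in>| lopts h \<Longrightarrow> game_ge TB h x"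
  by (erule is_number.cases) (auto simp: game_lt_def game_gt_def)
lemma num_optR: "is_number TB h \<Longrightarrow> x |\<in>| ropts h \<Longrightarrow> game_ge TB x h"
  by (erule is_number.cases) (auto simp: game_lt_def game_gt_def)

lemma inv_A: "is_number TB H \<Longrightarrow> ge0 TB (gplus H (gneg H))"
proof (induction H rule: is_number.induct)
  case (1 HL HR)
  define H where "H = Game HL HR"
  define J where "J = gplus H (gneg H)"
  have numL: "is_number TB h" "ge0 TB (gplus h (gneg h))" if "h |\<in>| HL" for h using 1 that by auto
  have numR: "is_number TB h" "ge0 TB (gplus h (gneg h))" if "h |\<in>| HR" for h using 1 that by auto
  have ltL: "game_ge TB H h" if "h |\<in>| HL" for h using 1 that by (auto simp: game_lt_def game_gt_def H_def)
  have ltR: "game_ge TB h H" if "h |\<in>| HR" for h using 1 that by (auto simp: game_lt_def game_gt_def H_def)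
  have KP: "ge0 TB K \<and> (\<exists>kl. kl |\<in>| lopts K \<and> ge0 TB kl) \<and> (\<forall>kr. kr |\<in>| ropts K \<longrightarrow> game_ge TB kr K)"
    if K: "K |\<in>| ropts J" for K
  proof -
    from K consider (a) hr where "hr |\<in>| HR" "K = gplus hr (gneg H)"
      | (b) hl where "hl |\<in>| HL" "K = gplus H (gneg hl)"
      unfolding J_def ropts_plus ropts_neg by (auto simp: H_def)
    then show ?thesis
    proof cases
      case a
      have g1: "game_ge TB (gneg H) (gneg hr)" using neg_ge[OF ltR[OF a(1)]] .
      have "ge0 TB K" unfolding ge0_def
      proof (intro allI impI)
        fix Y p m assume p: "p \<le> TB" and w: "lwins TB Y p m"
        have "lwins TB (gplus (gplus hr (gneg hr)) Y) p m" using ge0D[OF numR(2)[OF a(1)] p w] .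
        then have "lwins TB (gplus (gneg hr) (gplus hr Y)) p m" by (simp add: gac)
        then have "lwins TB (gplus (gneg H) (gplus hr Y)) p m" using geD[OF g1 p] by blast
        then show "lwins TB (gplus K Y) p m" unfolding a(2) by (simp add: gac)
      qed
      moreover have "gplus hr (gneg hr) |\<in>| lopts K"
        unfolding a(2) lopts_plus lopts_neg using a(1) by (auto simp: H_def)
      moreover have "game_ge TB kr K" if kr: "kr |\<in>| ropts K" for kr
      proof -
        from kr consider (c) k where "k |\<in>| ropts hr" "kr = gplus k (gneg H)"
          | (d) hl where "hl |\<in>| HL" "kr = gplus hr (gneg hl)"
          unfolding a(2) ropts_plus ropts_neg by (auto simp: H_def)
        then show ?thesis
        proof cases
          case c
          then show ?thesis unfolding a(2) using ge_add[OF num_optR[OF numR(1)[OF a(1)] c(1)]] by simp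
        next
          case d
          have "game_ge TB (gneg hl) (gneg H)" using neg_ge[OF ltL[OF d(1)]] .
          from ge_add[OF this, of hr] show ?thesis unfolding a(2) d(2) by (simp add: gplus_comm)
        qed
      qed
      ultimately show ?thesis using numR(2)[OF a(1)] by blast
    next
      case b
      have "ge0 TB K" unfolding ge0_def
      proof (intro allI impI)
        fix Y p m assume p: "p \<le> TB" and w: "lwins TB Y p m"
        have "lwins TB (gplus (gplus hl (gneg hl)) Y) p m" using ge0D[OF numL(2)[OF b(1)] p w] .
        then have "lwins TB (gplus hl (gplus (gneg hl) Y)) p m" by (simp add: gac)
        then have "lwins TB (gplus H (gplus (gneg hl) Y)) p m" using geD[OF ltL[OF b(1)] p] by blast
        then show "lwins TB (gplus K Y) p m" unfolding b(2) by (simp add: gac)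
      qed
      moreover have "gplus hl (gneg hl) |\<in>| lopts K"
        unfolding b(2) lopts_plus using b(1) by (auto simp: H_def)
      moreover have "game_ge TB kr K" if kr: "kr |\<in>| ropts K" for kr
      proof -
        from kr consider (c) k where "k |\<in>| HR" "kr = gplus k (gneg hl)"
          | (d) hll where "hll |\<in>| lopts hl" "kr = gplus H (gneg hll)"
          unfolding b(2) ropts_plus ropts_neg by (auto simp: H_def)
        then show ?thesis
        proof cases
          case c
          then show ?thesis unfolding b(2) using ge_add[OF ltR[OF c(1)]] by simp
        next
          case d
          have "game_ge TB (gneg hll) (gneg hl)" using neg_ge[OF num_optL[OF numL(1)[OF b(1)] d(1)]] .
          from ge_add[OF this, of H] show ?thesis unfolding b(2) d(2) by (simp add: gplus_comm)
        qed
      qed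
      ultimately show ?thesis using numL(2)[OF b(1)] by blast
    qed
  qed
  have main: "p \<le> TB \<Longrightarrow> lwins TB Z p m \<Longrightarrow> lwins TB (gplus J Z) p m" for Z p m
  proof (induction Z arbitrary: p m rule: game.induct)
    case (Game ZL ZR)
    let ?Z = "Game ZL ZR"
    have IHz: "lwins TB (gplus J z) q \<mu>" if "z |\<in>| ZL \<or> z |\<in>| ZR" "q \<le> TB" "lwins TB z q \<mu>" for z q \<mu>
      using Game.IH that by blast
    have RTK: "lwins TB (gplus K ?Z) q True" if KJ: "K |\<in>| ropts J" and "q \<le> TB" "p \<le> q" for K q
    proof (cases m)
      case True
      then have "lwins TB ?Z q True" using mono1[OF Game.prems(2) that(3)] by simp
      then show ?thesis using ge0D[of TB K] KP[OF that(1)] that(2) by blast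
    next
      case False
      then have "lwins TB ?Z q False" using mono1[OF Game.prems(2) that(3)] by simp
      moreover obtain kl where "kl |\<in>| lopts K" "ge0 TB kl" using KP[OF KJ] by blast
      ultimately show ?thesis using T1[of TB K kl q ?Z] KP[OF KJ] that(2) by blast
    qed
    show ?case
    proof (cases m)
      case True
      from Game.prems(2) True obtain l where l: "l \<le> p" and
        H: "\<forall>r\<le>TB-p. (r<l \<longrightarrow> LT TB ZL (p-l)) \<and> (r=l \<longrightarrow> LF TB ZL (p-l)) \<and> (l<r \<longrightarrow> RT TB ZR (p+r))"
        by (auto simp: lwT)
      have mT: "m = True" using True by simp
      show ?thesis unfolding mT lwT'
      proof (intro exI[of _ l] conjI allI impI l)
        fix r assume r: "r \<le> TB - p"
        { assume rl: "r < l"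
          then obtain z where z: "z |\<in>| ZL" "lwins TB z (p-l) True \<or> lwins TB z (p-l) False"
            using H r unfolding LT_def by blast
          then have "lwins TB (gplus J z) (p-l) True \<or> lwins TB (gplus J z) (p-l) False"
            using IHz[of z "p-l"] Game.prems by auto
          then show "LT TB (lopts (gplus J ?Z)) (p - l)" unfolding LT_def lopts_plus using z(1) by auto }
        { assume rl: "r = l"
          then obtain z where z: "z |\<in>| ZL" "lwins TB z (p-l) False"
            using H r unfolding LF_def by blast
          then have "lwins TB (gplus J z) (p-l) False" using IHz[of z "p-l"] Game.prems by auto
          then show "LF TB (lopts (gplus J ?Z)) (p - l)" unfolding LF_def lopts_plus using z(1) by auto }
        { assume rl: "l < r"
          have zr: "RT TB ZR (p+r)" using H r rl by auto
          show "RT TB (ropts (gplus J ?Z)) (p + r)" unfolding RT_def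
          proof (intro allI impI)
            fix x assume "x |\<in>| ropts (gplus J ?Z)"
            then consider (a) K where "K |\<in>| ropts J" "x = gplus K ?Z" | (b) z where "z |\<in>| ZR" "x = gplus J z"
              unfolding ropts_plus by auto
            then show "lwins TB x (p + r) True"
            proof cases
              case a then show ?thesis using RTK[of K "p+r"] r Game.prems(1) by simp
            next
              case b then show ?thesis using zr IHz[of z "p+r" True] r Game.prems(1) unfolding RT_def by auto
            qed
          qed }
      qed
    next
      case False
      from Game.prems(2) False obtain l where l: "l \<le> p" and
        H: "\<forall>r\<le>TB-p. (l<r \<longrightarrow> RB TB ZR (p+r)) \<and> (r=l \<longrightarrow> RT TB ZR (p+r)) \<and> (r<l \<longrightarrow> LF TB ZL (p-l))"
        by (auto simp: lwF)
      have mF: "m = False" using False by simp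
      have K0: "lwins TB (gplus K ?Z) q False" if "K |\<in>| ropts J" "q \<le> TB" "p \<le> q" for K q
        using ge0D[of TB K q ?Z False] KP[OF that(1)] that(2) mono1[OF Game.prems(2) that(3)] mF by blast
      show ?thesis unfolding mF lwF'
      proof (intro exI[of _ l] conjI allI impI l)
        fix r assume r: "r \<le> TB - p"
        { assume rl: "r < l"
          then obtain z where z: "z |\<in>| ZL" "lwins TB z (p-l) False"
            using H r unfolding LF_def by blast
          then have "lwins TB (gplus J z) (p-l) False" using IHz[of z "p-l"] Game.prems by auto
          then show "LF TB (lopts (gplus J ?Z)) (p - l)" unfolding LF_def lopts_plus using z(1) by auto }
        { assume rl: "r = l"
          have zr: "RT TB ZR (p+r)" using H r rl by auto
          show "RT TB (ropts (gplus J ?Z)) (p + r)" unfolding RT_def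
          proof (intro allI impI)
            fix x assume "x |\<in>| ropts (gplus J ?Z)"
            then consider (a) K where "K |\<in>| ropts J" "x = gplus K ?Z" | (b) z where "z |\<in>| ZR" "x = gplus J z"
              unfolding ropts_plus by auto
            then show "lwins TB x (p + r) True"
            proof cases
              case a then show ?thesis using RTK[of K "p+r"] r Game.prems(1) by simp
            next
              case b then show ?thesis using zr IHz[of z "p+r" True] r Game.prems(1) unfolding RT_def by auto
            qed
          qed }
        { assume rl: "l < r"
          have zr: "RB TB ZR (p+r)" using H r rl by auto
          show "RB TB (ropts (gplus J ?Z)) (p + r)" unfolding RB_def
          proof (intro allI impI)
            fix x assume "x |\<in>| ropts (gplus J ?Z)"
            then consider (a) K where "K |\<in>| ropts J" "x = gplus K ?Z" | (b) z where "z |\<in>| ZR" "x = gplus J z"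
              unfolding ropts_plus by auto
            then show "lwins TB x (p + r) False \<and> lwins TB x (p + r) True"
            proof cases
              case a then show ?thesis using RTK[of K "p+r"] K0[of K "p+r"] r Game.prems(1) by simp
            next
              case b then show ?thesis using zr IHz[of z "p+r"] r Game.prems(1) unfolding RB_def by auto
            qed
          qed }
      qed
    qed
  qed
  show ?case unfolding ge0_def J_def[symmetric] H_def[symmetric] using main by blast
qed

lemma inv_B: "is_number TB H \<Longrightarrow> p \<le> TB \<Longrightarrow> lwins TB (gplus (gplus H (gneg H)) Z) p m \<Longrightarrow> lwins TB Z p m"
proof (rule ccontr)
  assume n: "is_number TB H" and p: "p \<le> TB" and w: "lwins TB (gplus (gplus H (gneg H)) Z) p m"
    and nz: "\<not> lwins TB Z p m"
  have "lwins TB (gneg Z) (TB - p) (\<not> m)" using det[OF p, of Z m] nz by simp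
  then have "lwins TB (gplus (gplus H (gneg H)) (gneg Z)) (TB - p) (\<not> m)"
    using ge0D[OF inv_A[OF n], of "TB - p"] by simp
  moreover have "gplus (gplus H (gneg H)) (gneg Z) = gneg (gplus (gplus H (gneg H)) Z)"
    by (simp add: gneg_plus gac)
  ultimately have "lwins TB (gneg (gplus (gplus H (gneg H)) Z)) (TB - p) (\<not> m)" by simp
  then show False using det[OF p] w by blast
qed

lemma add_lt: "game_lt TB a b \<Longrightarrow> is_number TB H \<Longrightarrow> game_lt TB (gplus a H) (gplus b H)"
proof -
  assume lt: "game_lt TB a b" and n: "is_number TB H"
  then have ge: "game_ge TB b a" and nge: "\<not> game_ge TB a b" by (auto simp: game_lt_def game_gt_def)
  from nge obtain X p m where p: "p \<le> TB" and wb: "lwins TB (gplus b X) p m" and wa: "\<not> lwins TB (gplus a X) p m"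
    unfolding ge_iff by blast
  have e: "gplus (gplus c H) (gplus (gneg H) X) = gplus (gplus H (gneg H)) (gplus c X)" for c
    by (simp add: gac)
  have "lwins TB (gplus (gplus b H) (gplus (gneg H) X)) p m"
    unfolding e using ge0D[OF inv_A[OF n] p wb] .
  moreover have "\<not> lwins TB (gplus (gplus a H) (gplus (gneg H) X)) p m"
    unfolding e using inv_B[OF n p] wa by blast
  ultimately have "\<not> game_ge TB (gplus a H) (gplus b H)" unfolding ge_iff using p by blast
  moreover have "game_ge TB (gplus b H) (gplus a H)" using ge_add[OF ge] .
  ultimately show ?thesis by (simp add: game_lt_def game_gt_def)
qed

theorem mainTheorem9:
  fixes TB :: nat and G H :: game
  assumes "is_number TB G" and "is_number TB H"
  shows "is_number TB (gplus G H)"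
  using assms
proof (induction G arbitrary: H rule: is_number.induct)
  case (1 GL GR)
  note ohyps = "1.hyps" "1.IH" and oprems = "1.prems"
  from oprems show ?case
  proof (induction H rule: is_number.induct)
    case (1 HL HR)
    note ihyps = "1.hyps" "1.IH"
    let ?G = "Game GL GR" and ?H = "Game HL HR"
    have nG: "is_number TB ?G" using ohyps by (intro is_number.intros) auto
    have nH: "is_number TB ?H" using ihyps by (intro is_number.intros) auto
    define Ls where "Ls = (\<lambda>g. gplus g ?H) |`| GL |\<union>| (\<lambda>h. gplus ?G h) |`| HL"
    define Rs where "Rs = (\<lambda>g. gplus g ?H) |`| GR |\<union>| (\<lambda>h. gplus ?G h) |`| HR"
    have e: "gplus ?G ?H = Game Ls Rs" unfolding Ls_def Rs_def by (rule gplus_eq)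
    show ?case unfolding e
    proof (intro is_number.intros ballI)
      fix x assume "x \<in> fset Ls"
      then consider (a) g where "g |\<in>| GL" "x = gplus g ?H" | (b) h where "h |\<in>| HL" "x = gplus ?G h"
        unfolding Ls_def by auto
      then show "is_number TB x"
      proof cases
        case a then show ?thesis using ohyps nH by auto
      next
        case b then show ?thesis using ihyps by auto
      qed
    next
      fix x assume "x \<in> fset Rs"
      then consider (a) g where "g |\<in>| GR" "x = gplus g ?H" | (b) h where "h |\<in>| HR" "x = gplus ?G h"
        unfolding Rs_def by auto
      then show "is_number TB x"
      proof cases
        case a then show ?thesis using ohyps nH by auto
      next
        case b then show ?thesis using ihyps by auto
      qed
    next
      fix x assume "x \<in> fset Ls"
      then consider (a) g where "g |\<in>| GL" "x = gplus g ?H" | (b) h where "h |\<in>| HL" "x = gplus ?G h"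
        unfolding Ls_def by auto
      then show "game_lt TB x (Game Ls Rs)"
      proof cases
        case a then show ?thesis using add_lt[of TB g ?G ?H] ohyps nH e by auto
      next
        case b then show ?thesis using add_lt[of TB h ?H ?G] ihyps nG e by (auto simp: gplus_comm)
      qed
    next
      fix x assume "x \<in> fset Rs"
      then consider (a) g where "g |\<in>| GR" "x = gplus g ?H" | (b) h where "h |\<in>| HR" "x = gplus ?G h"
        unfolding Rs_def by auto
      then show "game_lt TB (Game Ls Rs) x"
      proof cases
        case a then show ?thesis using add_lt[of TB ?G g ?H] ohyps nH e by auto
      next
        case b then show ?thesis using add_lt[of TB ?H h ?G] ihyps nG e by (auto simp: gplus_comm)
      qed
    qed
  qed
qed

end
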